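(* Consider the following algorithm \textsc{$\ell_\infty$-Minimization} on input $A\in\mathbb{R}^{n\times m}$, $b\in\mathbb{R}^n$ in the column span of $A$, $\epsilon>0$, $M>0$. Set $t=0$, $r^{(0)}=\mathbf{1}/m$, $t'=0$, $s=0\in\mathbb{R}^m$. While $\|r^{(t)}\|_1\le 1/\epsilon$: (i) let $x^{(t)}=\arg\min_{x:Ax=b}\sum_i r^{(t)}_i x_i^2$; (ii) if $\|x^{(t)}\|_\infty\le m^{1/3}M$, set $t'\leftarrow t'+1$ and $s\leftarrow s+x^{(t)}$; (iii) if $t'\ge 1$ and $\|s\|_\infty/t'\le(1+\epsilon)M$, return $s/t'$; (iv) let $\alpha^{(t)}_i=1$ if $|x^{(t)}_i|<(1+\epsilon)M$ and $\alpha^{(t)}_i=(x^{(t)}_i)^2/M^2$ otherwise; (v) if $\alpha^{(t)}=\mathbf{1}$, return $x^{(t)}$; (vi) set $r^{(t+1)}_i=r^{(t)}_i\alpha^{(t)}_i$ for all $i$ and $t\leftarrow t+1$. When the while loop exits, return $r^{(t)}/\|r^{(t)}\|_1$. Whenever this algorithm returns after the while loop exits, the returned vector $\bar r=r^{(t)}/\|r^{(t)}\|_1$ satisfies \[ \mathcal{E}_{\bar r}(b)\ \ge\ (1-\epsilon)^2M^2, \] where $\mathcal{E}_{\bar r}(b)=\min_{x:Ax=b}\sum_i \bar r_i x_i^2$.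
   Context: $\mathbf{1}$ is the all-ones vector in $\mathbb{R}^m$. *)

theory Defs
  imports "HOL-Analysis.Analysis"
begin

definition l1norm :: "real ^ 'm \<Rightarrow> real" where
  "l1norm v = (\<Sum>i\<in>UNIV. \<bar>v $ i\<bar>)"

definition linfnorm :: "real ^ 'm \<Rightarrow> real" where
  "linfnorm v = Max (range (\<lambda>i. \<bar>v $ i\<bar>))"

definition wsq :: "real ^ 'm \<Rightarrow> real ^ 'm \<Rightarrow> real" where
  "wsq r x = (\<Sum>i\<in>UNIV. r $ i * (x $ i)^2)"

definition energy :: "real ^ 'm ^ 'n \<Rightarrow> real ^ 'm \<Rightarrow> real ^ 'n \<Rightarrow> real" where
  "energy A r b = Inf {wsq r x | x. A *v x = b}"

definition argmin_x :: "real ^ 'm ^ 'n \<Rightarrow> real ^ 'm \<Rightarrow> real ^ 'n \<Rightarrow> real ^ 'm" where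
  "argmin_x A r b = (THE x. A *v x = b \<and> (\<forall>y. A *v y = b \<longrightarrow> wsq r x \<le> wsq r y))"

text \<open>State of the while loop: (r, t', s); the counter t is implicit.
  Outcomes: still running, returned inside the loop (steps iii / v),
  or returned after the loop exits.\<close>
datatype 'm alg_state =
    Running "real ^ 'm" nat "real ^ 'm"
  | ReturnInLoop "real ^ 'm"
  | ReturnAfterLoop "real ^ 'm"

definition alpha :: "real \<Rightarrow> real \<Rightarrow> real ^ 'm \<Rightarrow> real ^ 'm" where
  "alpha \<epsilon> M x = (\<chi> i. if \<bar>x $ i\<bar> < (1 + \<epsilon>) * M then 1 else (x $ i)^2 / M^2)"

definition alg_step :: "real ^ 'm ^ 'n \<Rightarrow> real ^ 'n \<Rightarrow> real \<Rightarrow> real \<Rightarrow>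
    real ^ 'm \<Rightarrow> nat \<Rightarrow> real ^ 'm \<Rightarrow> 'm alg_state" where
  "alg_step A b \<epsilon> M r tp s =
    (if \<not> (l1norm r \<le> 1 / \<epsilon>) then ReturnAfterLoop ((1 / l1norm r) *\<^sub>R r)
     else
       (let x = argmin_x A r b;
            good = (linfnorm x \<le> real CARD('m) powr (1/3) * M);
            tp' = (if good then tp + 1 else tp);
            s' = (if good then s + x else s)
        in if tp' \<ge> 1 \<and> linfnorm s' / real tp' \<le> (1 + \<epsilon>) * M
           then ReturnInLoop ((1 / real tp') *\<^sub>R s')
           else (let a = alpha \<epsilon> M x in
                 if a = (\<chi> i. 1) then ReturnInLoop x
                 else Running (\<chi> i. r $ i * a $ i) tp' s')))"

fun alg_run :: "real ^ 'm ^ 'n \<Rightarrow> real ^ 'n \<Rightarrow> real \<Rightarrow> real \<Rightarrow> nat \<Rightarrow> 'm alg_state" where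
  "alg_run A b \<epsilon> M 0 = Running (\<chi> i. 1 / real CARD('m)) 0 0"
| "alg_run A b \<epsilon> M (Suc k) =
     (case alg_run A b \<epsilon> M k of
        Running r tp s \<Rightarrow> alg_step A b \<epsilon> M r tp s
      | st \<Rightarrow> st)"

end

theory Submission
  imports Defs
begin

lemma wsq_expand:
  "wsq r (x + t *\<^sub>R d) = wsq r x + 2 * t * (\<Sum>i\<in>UNIV. r $ i * x $ i * d $ i)
     + t^2 * wsq r d"
  unfolding wsq_def
  by (simp add: sum.distrib sum_distrib_left power2_eq_square algebra_simps)

lemma orth:
  fixes A :: "real ^ 'm ^ 'n"
  assumes xb: "A *v x = b" and xmin: "\<forall>y. A *v y = b \<longrightarrow> wsq r x \<le> wsq r y"
    and rpos: "\<forall>i. r $ i > 0" and yb: "A *v y = b"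
  shows "(\<Sum>i\<in>UNIV. r $ i * x $ i * (y - x) $ i) \<ge> 0"
proof (rule ccontr)
  define d where "d = y - x"
  define S1 where "S1 = (\<Sum>i\<in>UNIV. r $ i * x $ i * d $ i)"
  define S2 where "S2 = wsq r d"
  assume "\<not> ?thesis"
  hence s1: "S1 < 0" by (simp add: S1_def d_def)
  have s2: "S2 \<ge> 0" unfolding S2_def wsq_def using rpos
    by (intro sum_nonneg) (simp add: less_imp_le)
  define t where "t = - S1 / (S2 + 1)"
  have "S1 / (S2 + 1) < 0" using s1 s2 by (intro divide_neg_pos) auto
  hence tpos: "t > 0" by (simp add: t_def)
  have "A *v (x + t *\<^sub>R d) = b" using xb yb
    by (simp add: d_def matrix_vector_right_distrib matrix_vector_mult_scaleR
        matrix_vector_mult_diff_distrib)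
  hence "wsq r x \<le> wsq r (x + t *\<^sub>R d)" using xmin by blast
  hence "0 \<le> 2 * t * S1 + t^2 * S2" by (simp add: wsq_expand S1_def S2_def)
  hence h: "0 \<le> t * (2 * S1 + t * S2)" by (simp add: power2_eq_square algebra_simps)
  have "t * S2 = - S1 * (S2 / (S2 + 1))" using s2 by (simp add: t_def field_simps)
  moreover have "S2 / (S2 + 1) < 1" using s2 by simp
  ultimately have "t * S2 < - S1" using s1
    by (metis mult.right_neutral mult_strict_left_mono neg_0_less_iff_less)
  hence "2 * S1 + t * S2 < 0" using s1 by linarith
  hence "t * (2 * S1 + t * S2) < 0" using tpos by (simp add: mult_pos_neg)
  thus False using h by linarith
qed

lemma wsq_lower:
  assumes "\<forall>i. r $ i \<ge> c"
  shows "wsq r x \<ge> c * (norm x)^2"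
proof -
  have "c * (norm x)^2 = (\<Sum>i\<in>UNIV. c * (x $ i)^2)"
    by (simp only: power2_norm_eq_inner inner_vec_def) (simp add: sum_distrib_left power2_eq_square)
  also have "\<dots> \<le> wsq r x" unfolding wsq_def
    by (intro sum_mono mult_right_mono) (use assms in auto)
  finally show ?thesis .
qed

lemma wsq_cont: "continuous_on S (\<lambda>x. wsq r x)"
  unfolding wsq_def by (intro continuous_intros)

lemma minimizer_exists:
  fixes A :: "real ^ 'm ^ 'n"
  assumes rpos: "\<forall>i. r $ i > 0" and x0: "A *v x0 = b"
  shows "\<exists>x. A *v x = b \<and> (\<forall>y. A *v y = b \<longrightarrow> wsq r x \<le> wsq r y)"
proof -
  define c where "c = Min (range (\<lambda>i. r $ i))"
  have cpos: "c > 0" unfolding c_def using rpos by (subst Min_gr_iff) auto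
  have cle: "\<forall>i. r $ i \<ge> c" unfolding c_def by auto
  define R where "R = sqrt (wsq r x0 / c)"
  define S where "S = {x. A *v x = b} \<inter> cball 0 R"
  have cl: "closed {x. A *v x = b}"
    by (intro closed_Collect_eq continuous_intros)
  have "compact S" unfolding S_def by (intro closed_Int_compact cl compact_cball)
  have x0R: "norm x0 \<le> R"
  proof -
    have "c * (norm x0)^2 \<le> wsq r x0" by (rule wsq_lower[OF cle])
    hence "(norm x0)^2 \<le> wsq r x0 / c" using cpos by (simp add: field_simps)
    thus ?thesis unfolding R_def by (metis norm_ge_zero real_le_rsqrt)
  qed
  hence "x0 \<in> S" using x0 by (simp add: S_def)
  then obtain x where xS: "x \<in> S" and xm: "\<forall>y\<in>S. wsq r x \<le> wsq r y"
    using continuous_attains_inf[OF \<open>compact S\<close> _ wsq_cont] by blast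
  have "\<forall>y. A *v y = b \<longrightarrow> wsq r x \<le> wsq r y"
  proof (intro allI impI)
    fix y assume yb: "A *v y = b"
    show "wsq r x \<le> wsq r y"
    proof (cases "norm y \<le> R")
      case True thus ?thesis using xm yb by (simp add: S_def)
    next
      case False
      have "0 \<le> c * (norm x0)^2" using cpos by simp
      hence "0 \<le> wsq r x0" using wsq_lower[OF cle, of x0] by linarith
      hence "0 \<le> wsq r x0 / c" using cpos by simp
      hence R0: "R \<ge> 0" unfolding R_def by simp
      have "R^2 < (norm y)^2" using False R0
        by (simp add: power_strict_mono)
      have "R^2 = wsq r x0 / c" unfolding R_def using \<open>0 \<le> wsq r x0 / c\<close>
        by (rule real_sqrt_pow2)
      hence "wsq r x0 / c < (norm y)^2" using \<open>R^2 < _\<close> by linarith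
      hence "wsq r x0 < (norm y)^2 * c" using cpos by (simp add: pos_divide_less_eq)
      hence "wsq r x0 < c * (norm y)^2" by (simp only: mult.commute)
      also have "\<dots> \<le> wsq r y" by (rule wsq_lower[OF cle])
      finally show ?thesis using xm \<open>x0 \<in> S\<close> by force
    qed
  qed
  thus ?thesis using xS by (auto simp: S_def)
qed

lemma argmin_props:
  fixes A :: "real ^ 'm ^ 'n"
  assumes rpos: "\<forall>i. r $ i > 0" and x0: "A *v x0 = b"
  shows "A *v argmin_x A r b = b \<and> (\<forall>y. A *v y = b \<longrightarrow> wsq r (argmin_x A r b) \<le> wsq r y)"
proof -
  have "\<exists>!x. A *v x = b \<and> (\<forall>y. A *v y = b \<longrightarrow> wsq r x \<le> wsq r y)"
  proof (rule ex_ex1I)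
    show "\<exists>x. A *v x = b \<and> (\<forall>y. A *v y = b \<longrightarrow> wsq r x \<le> wsq r y)"
      by (rule minimizer_exists[OF rpos x0])
  next
    fix x1 x2
    assume h1: "A *v x1 = b \<and> (\<forall>y. A *v y = b \<longrightarrow> wsq r x1 \<le> wsq r y)"
      and h2: "A *v x2 = b \<and> (\<forall>y. A *v y = b \<longrightarrow> wsq r x2 \<le> wsq r y)"
    have o1: "(\<Sum>i\<in>UNIV. r $ i * x1 $ i * (x2 - x1) $ i) \<ge> 0"
      using orth[of A x1 b r x2] h1 h2 rpos by blast
    have o2: "(\<Sum>i\<in>UNIV. r $ i * x2 $ i * (x1 - x2) $ i) \<ge> 0"
      using orth[of A x2 b r x1] h1 h2 rpos by blast
    have "(\<Sum>i\<in>UNIV. r $ i * x1 $ i * (x2 - x1) $ i) + (\<Sum>i\<in>UNIV. r $ i * x2 $ i * (x1 - x2) $ i)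
        = - (\<Sum>i\<in>UNIV. r $ i * ((x1 - x2) $ i)^2)"
      by (simp add: sum.distrib[symmetric] sum_negf[symmetric] power2_eq_square algebra_simps)
    hence le: "(\<Sum>i\<in>UNIV. r $ i * ((x1 - x2) $ i)^2) \<le> 0" using o1 o2 by linarith
    have nn: "0 \<le> r $ i * ((x1 - x2) $ i)^2" for i using rpos by (simp add: less_imp_le)
    have "(\<Sum>i\<in>UNIV. r $ i * ((x1 - x2) $ i)^2) = 0"
      using le sum_nonneg[of UNIV "\<lambda>i. r $ i * ((x1 - x2) $ i)^2", OF nn] by linarith
    hence "\<forall>i\<in>UNIV. r $ i * ((x1 - x2) $ i)^2 = 0"
      using sum_nonneg_eq_0_iff[of UNIV "\<lambda>i. r $ i * ((x1 - x2) $ i)^2"] nn by simp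
    have "\<forall>i. x1 $ i = x2 $ i"
    proof
      fix i
      have "r $ i * ((x1 - x2) $ i)^2 = 0" using \<open>\<forall>i\<in>UNIV. _\<close> by simp
      hence "(x1 - x2) $ i = 0" using rpos[rule_format, of i] by simp
      thus "x1 $ i = x2 $ i" by simp
    qed
    thus "x1 = x2" by (simp add: vec_eq_iff)
  qed
  thus ?thesis unfolding argmin_x_def by (rule theI')
qed

definition inv :: "real \<Rightarrow> real ^ 'm ^ 'n \<Rightarrow> real ^ 'n \<Rightarrow> real ^ 'm \<Rightarrow> bool" where
  "inv M A b r \<longleftrightarrow> (\<forall>i. r $ i > 0) \<and> (\<forall>y. A *v y = b \<longrightarrow> wsq r y \<ge> M^2 * (l1norm r - 1))"

lemma l1norm_pos: "\<forall>i. r $ i > 0 \<Longrightarrow> l1norm r = (\<Sum>i\<in>UNIV. r $ i)"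
  unfolding l1norm_def by (intro sum.cong) (auto simp: less_imp_le)

lemma step_inv:
  fixes A :: "real ^ 'm ^ 'n"
  assumes I: "inv M A b r" and x0: "A *v x0 = b" and eps: "0 < \<epsilon>" and M: "0 < M"
  shows "inv M A b (\<chi> i. r $ i * alpha \<epsilon> M (argmin_x A r b) $ i)"
proof -
  define x where "x = argmin_x A r b"
  define a where "a = (alpha \<epsilon> M x :: real ^ 'm)"
  define r' where "r' = (\<chi> i. r $ i * a $ i)"
  have rpos: "\<forall>i. r $ i > 0" using I by (simp add: inv_def)
  have xp: "A *v x = b" "\<forall>y. A *v y = b \<longrightarrow> wsq r x \<le> wsq r y"
    using argmin_props[OF rpos x0] by (auto simp: x_def)
  have Ex: "wsq r x \<ge> M^2 * (l1norm r - 1)" using I xp by (simp add: inv_def)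
  have case2: "(x $ i)^2 / M^2 \<ge> 1" if "\<not> \<bar>x $ i\<bar> < (1 + \<epsilon>) * M" for i
  proof -
    have "M \<le> (1 + \<epsilon>) * M" using eps M by simp
    hence "M \<le> \<bar>x $ i\<bar>" using that by linarith
    hence "M^2 \<le> (x $ i)^2" using M by (metis abs_ge_zero less_imp_le power2_abs power_mono)
    thus ?thesis using M by simp
  qed
  have a1: "a $ i \<ge> 1" for i using case2[of i] by (simp add: a_def alpha_def)
  have r'pos: "\<forall>i. r' $ i > 0" using rpos a1
    by (simp add: r'_def) (metis less_le_trans mult_pos_pos zero_less_one)
  have trm: "r $ i * a $ i * (y $ i)^2 \<ge> 2 * (r $ i * x $ i * y $ i) - r $ i * (x $ i)^2
       + M^2 * (r $ i * a $ i - r $ i)" for i y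
  proof (cases "\<bar>x $ i\<bar> < (1 + \<epsilon>) * M")
    case True
    hence "a $ i = 1" by (simp add: a_def alpha_def)
    moreover have "0 \<le> r $ i * (y $ i - x $ i)^2" using rpos by (simp add: less_imp_le)
    ultimately show ?thesis by (simp add: power2_eq_square algebra_simps)
  next
    case False
    hence "a $ i = (x $ i)^2 / M^2" by (simp add: a_def alpha_def)
    have e1: "r $ i * a $ i * (y $ i)^2 = r $ i * (x $ i * y $ i / M)^2" using M \<open>a $ i = _\<close>
      by (simp add: power2_eq_square)
    have e2: "M^2 * (r $ i * a $ i - r $ i) = r $ i * (x $ i)^2 - r $ i * M^2"
      using M \<open>a $ i = _\<close> by (simp add: right_diff_distrib)
    have e3: "0 \<le> r $ i * (x $ i * y $ i / M - M)^2" using rpos by (simp add: less_imp_le)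
    have e4: "r $ i * (x $ i * y $ i / M - M)^2 = r $ i * (x $ i * y $ i / M)^2
        - 2 * (r $ i * x $ i * y $ i) + r $ i * M^2" using M
      by (simp add: power2_eq_square algebra_simps)
    from e1 e2 e3 e4 show ?thesis by linarith
  qed
  have "\<forall>y. A *v y = b \<longrightarrow> wsq r' y \<ge> M^2 * (l1norm r' - 1)"
  proof (intro allI impI)
    fix y assume yb: "A *v y = b"
    have o: "(\<Sum>i\<in>UNIV. r $ i * x $ i * (y - x) $ i) \<ge> 0"
      using orth[OF xp(1) xp(2) rpos yb] .
    have oo: "(\<Sum>i\<in>UNIV. r $ i * x $ i * y $ i) \<ge> wsq r x"
    proof -
      have "(\<Sum>i\<in>UNIV. r $ i * x $ i * (y - x) $ i) = (\<Sum>i\<in>UNIV. r $ i * x $ i * y $ i) - wsq r x"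
        unfolding wsq_def by (simp add: sum_subtractf[symmetric] power2_eq_square algebra_simps)
      thus ?thesis using o by linarith
    qed
    have "wsq r' y = (\<Sum>i\<in>UNIV. r $ i * a $ i * (y $ i)^2)" by (simp add: wsq_def r'_def)
    also have "\<dots> \<ge> (\<Sum>i\<in>UNIV. 2 * (r $ i * x $ i * y $ i) - r $ i * (x $ i)^2
       + M^2 * (r $ i * a $ i - r $ i))" by (intro sum_mono trm)
    also have "(\<Sum>i\<in>UNIV. 2 * (r $ i * x $ i * y $ i) - r $ i * (x $ i)^2
       + M^2 * (r $ i * a $ i - r $ i)) = 2 * (\<Sum>i\<in>UNIV. r $ i * x $ i * y $ i) - wsq r x
        + M^2 * ((\<Sum>i\<in>UNIV. r' $ i) - (\<Sum>i\<in>UNIV. r $ i))"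
      by (simp add: wsq_def r'_def sum.distrib sum_subtractf sum_distrib_left right_diff_distrib)
    finally have "wsq r' y \<ge> 2 * (\<Sum>i\<in>UNIV. r $ i * x $ i * y $ i) - wsq r x
        + M^2 * ((\<Sum>i\<in>UNIV. r' $ i) - (\<Sum>i\<in>UNIV. r $ i))" .
    moreover have "l1norm r' = (\<Sum>i\<in>UNIV. r' $ i)" by (rule l1norm_pos[OF r'pos])
    moreover have "l1norm r = (\<Sum>i\<in>UNIV. r $ i)" by (rule l1norm_pos[OF rpos])
    ultimately show "wsq r' y \<ge> M^2 * (l1norm r' - 1)" using oo Ex
      by (simp add: algebra_simps)
  qed
  hence "inv M A b r'" unfolding inv_def using r'pos by blast
  thus ?thesis by (simp only: r'_def a_def x_def)
qed

lemma run_inv: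
  fixes A :: "real ^ 'm ^ 'n"
  assumes x0: "A *v x0 = b" and eps: "0 < \<epsilon>" and M: "0 < M"
  shows "case alg_run A b \<epsilon> M k of
      Running r tp s \<Rightarrow> inv M A b r
    | ReturnInLoop _ \<Rightarrow> True
    | ReturnAfterLoop rb \<Rightarrow> (\<exists>r. inv M A b r \<and> \<not> (l1norm r \<le> 1 / \<epsilon>) \<and> rb = (1 / l1norm r) *\<^sub>R r)"
proof (induction k)
  case 0
  have "l1norm (\<chi> i::'m. 1 / real CARD('m)) = 1" by (simp add: l1norm_def)
  moreover have "wsq (\<chi> i::'m. 1 / real CARD('m)) y \<ge> 0" for y
    unfolding wsq_def by (intro sum_nonneg) simp
  ultimately show ?case by (simp add: inv_def)
next
  case (Suc k)
  show ?case
  proof (cases "alg_run A b \<epsilon> M k")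
    case (Running r tp s)
    hence I: "inv M A b r" using Suc by simp
    show ?thesis using Running I step_inv[OF I x0 eps M]
      by (auto simp: alg_step_def Let_def)
  next
    case (ReturnInLoop x) thus ?thesis using Suc by simp
  next
    case (ReturnAfterLoop x) thus ?thesis using Suc by simp
  qed
qed

theorem lemma4p5:
  fixes A :: "real ^ 'm ^ 'n" and b :: "real ^ 'n" and \<epsilon> M :: real
    and rbar :: "real ^ 'm" and k :: nat
  assumes "b \<in> range (\<lambda>x. A *v x)"
    and "0 < \<epsilon>" and "\<epsilon> \<le> 1" and "0 < M"
    and "alg_run A b \<epsilon> M k = ReturnAfterLoop rbar"
  shows "energy A rbar b \<ge> (1 - \<epsilon>)^2 * M^2"
proof -
  obtain x0 where x0: "A *v x0 = b" using assms(1) by auto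
  from run_inv[OF x0 assms(2) assms(4), of k] assms(5)
  obtain r where I: "inv M A b r" and L: "\<not> (l1norm r \<le> 1 / \<epsilon>)"
    and rb: "rbar = (1 / l1norm r) *\<^sub>R r" by auto
  define L where "L = l1norm r"
  have Lg: "L > 1 / \<epsilon>" using L by (simp add: L_def)
  have "1 / \<epsilon> > 0" using assms(2) by simp
  hence Lpos: "L > 0" using Lg by linarith
  have invL: "1 / L < \<epsilon>" using Lg assms(2) Lpos by (simp add: field_simps)
  have bound: "wsq rbar y \<ge> (1 - \<epsilon>)^2 * M^2" if yb: "A *v y = b" for y
  proof -
    have w: "wsq rbar y = wsq r y / L" by (simp add: rb wsq_def L_def sum_divide_distrib)
    have "wsq r y \<ge> M^2 * (L - 1)" using I yb by (simp add: inv_def L_def)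
    hence "wsq r y / L \<ge> M^2 * (L - 1) / L" using Lpos by (simp add: divide_right_mono)
    moreover have "M^2 * (L - 1) / L = M^2 * (1 - 1 / L)" using Lpos by (simp add: field_simps)
    ultimately have "wsq r y / L \<ge> M^2 * (1 - 1 / L)" by simp
    moreover have "M^2 * (1 - 1 / L) \<ge> M^2 * (1 - \<epsilon>)" using invL
      by (intro mult_left_mono) auto
    moreover have "(1 - \<epsilon>)^2 * M^2 \<le> M^2 * (1 - \<epsilon>)"
    proof -
      have "(1 - \<epsilon>) * (1 - \<epsilon>) \<le> 1 * (1 - \<epsilon>)"
        by (rule mult_right_mono) (use assms(2,3) in auto)
      hence "(1 - \<epsilon>)^2 \<le> 1 - \<epsilon>" by (simp add: power2_eq_square)
      hence "(1 - \<epsilon>)^2 * M^2 \<le> (1 - \<epsilon>) * M^2" by (rule mult_right_mono) simp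
      thus ?thesis by (simp only: mult.commute)
    qed
    ultimately show ?thesis using w by linarith
  qed
  show ?thesis unfolding energy_def
    by (rule cInf_greatest) (use x0 bound in auto)
qed

end
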